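(* Let $F$ be a Ferrers diagram and let $(x,y)\in\mathbb{N}^2$ with $x>1$, $y>1$ and $(x,y)\notin F$. Then the divisor $D_{x,y}$ on $R(F)$ has positive rank.
   Context: $\mathbb{N}=\{1,2,3,\dots\}$. A Ferrers diagram is a finite subset $F\subset\mathbb{N}^2$ such that whenever $(x,y)\in F$, either $x=1$ or $(x-1,y)\in F$, and either $y=1$ or $(x,y-1)\in F$; $x$ is the column index and $y$ the row index. The Ferrers rook graph $R(F)$ is the simple graph with vertex set $F$ in which distinct $(x,y),(x',y')$ are adjacent iff $x=x'$ or $y=y'$. For $(x,y)\in\mathbb{N}^2$, $D_{x,y}=\sum_{(x',y')\in F,\ x'\neq x,\ y'\neq y}(x',y')$, i.e. one chip on each vertex of $F$ not in column $x$ and not in row $y$. Divisors on a graph: functions $D:V\to\mathbb{Z}$; firing a vertex $v$ means $v$ loses $\deg(v)$ chips and each neighbor gains one; divisors are equivalent if related by a sequence of firings; $\vert D\vert$ is the set of effective (nonnegative) divisors equivalent to $D$; $D$ has positive rank if for every vertex $v$ some $D'\in\vert D\vert$ has $D'(v)>0$. *)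

theory Defs
  imports Main
begin

text \<open>Points of N^2 with N = {1,2,3,...}; the first coordinate is the column x,
  the second the row y.\<close>

definition ferrers :: "(nat \<times> nat) set \<Rightarrow> bool" where
  "ferrers F \<longleftrightarrow> finite F \<and>
     (\<forall>(x, y) \<in> F. x \<ge> 1 \<and> y \<ge> 1 \<and>
        (x = 1 \<or> (x - 1, y) \<in> F) \<and> (y = 1 \<or> (x, y - 1) \<in> F))"

definition rook_adj :: "nat \<times> nat \<Rightarrow> nat \<times> nat \<Rightarrow> bool" where
  "rook_adj v w \<longleftrightarrow> v \<noteq> w \<and> (fst v = fst w \<or> snd v = snd w)"

definition rook_deg :: "(nat \<times> nat) set \<Rightarrow> nat \<times> nat \<Rightarrow> nat" where
  "rook_deg F v = card {w \<in> F. rook_adj v w}"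

text \<open>Divisors are functions to int; only their values on F matter.
  Firing f(v) times each vertex v (f integer-valued) changes D to
  D(v) - deg(v) f(v) + sum of f over neighbours of v.\<close>
definition fire_by :: "(nat \<times> nat) set \<Rightarrow> (nat \<times> nat \<Rightarrow> int) \<Rightarrow> (nat \<times> nat \<Rightarrow> int) \<Rightarrow> nat \<times> nat \<Rightarrow> int" where
  "fire_by F f D v = D v - int (rook_deg F v) * f v + (\<Sum>w \<in> {w \<in> F. rook_adj v w}. f w)"

definition div_equiv :: "(nat \<times> nat) set \<Rightarrow> (nat \<times> nat \<Rightarrow> int) \<Rightarrow> (nat \<times> nat \<Rightarrow> int) \<Rightarrow> bool" where
  "div_equiv F D D' \<longleftrightarrow> (\<exists>f. \<forall>v \<in> F. D' v = fire_by F f D v)"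

definition effective :: "(nat \<times> nat) set \<Rightarrow> (nat \<times> nat \<Rightarrow> int) \<Rightarrow> bool" where
  "effective F D \<longleftrightarrow> (\<forall>v \<in> F. D v \<ge> 0)"

definition positive_rank :: "(nat \<times> nat) set \<Rightarrow> (nat \<times> nat \<Rightarrow> int) \<Rightarrow> bool" where
  "positive_rank F D \<longleftrightarrow>
     (\<forall>v \<in> F. \<exists>D'. div_equiv F D D' \<and> effective F D' \<and> D' v > 0)"

definition D_xy :: "(nat \<times> nat) set \<Rightarrow> nat \<Rightarrow> nat \<Rightarrow> nat \<times> nat \<Rightarrow> int" where
  "D_xy F x y v = (if v \<in> F \<and> fst v \<noteq> x \<and> snd v \<noteq> y then 1 else 0)"

end

theory Submission
  imports Defs
begin

lemma sum_ind: "finite N \<Longrightarrow> (\<Sum>w\<in>N. (if P w then -1 else 0::int)) = - int (card {w\<in>N. P w})"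
proof -
  assume "finite N"
  hence "(\<Sum>w\<in>N. (if P w then -1 else 0::int)) = (\<Sum>w\<in>{w\<in>N. P w}. -1)"
    by (simp add: sum.inter_filter[symmetric])
  thus ?thesis by simp
qed

lemma card_split: "finite N \<Longrightarrow> card N = card {w\<in>N. P w} + card {w\<in>N. \<not> P w}"
proof -
  assume f: "finite N"
  have "N = {w\<in>N. P w} \<union> {w\<in>N. \<not> P w}" by auto
  hence "card N = card ({w\<in>N. P w} \<union> {w\<in>N. \<not> P w})" by simp
  also have "\<dots> = card {w\<in>N. P w} + card {w\<in>N. \<not> P w}"
    by (rule card_Un_disjoint) (use f in auto)
  finally show ?thesis .
qed

lemma col_case:
  assumes F: "ferrers F" and x: "x > 1" and xy: "(x, y) \<notin> F" and v: "v \<in> F"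
  shows "fire_by F (\<lambda>w. if fst w = x then -1 else 0) (D_xy F x y) v \<ge> 0
       \<and> (fst v = x \<longrightarrow> fire_by F (\<lambda>w. if fst w = x then -1 else 0) (D_xy F x y) v > 0)"
proof -
  define N where "N = {w\<in>F. rook_adj v w}"
  have "finite F" using F unfolding ferrers_def by blast
  hence fin: "finite N" unfolding N_def by simp
  define A where "A = {w\<in>N. fst w = x}"
  define B where "B = {w\<in>N. fst w \<noteq> x}"
  have cN: "card N = card A + card B" unfolding A_def B_def using card_split[OF fin] .
  have sN: "(\<Sum>w\<in>N. (if fst w = x then -1 else 0::int)) = - int (card A)"
    unfolding A_def using sum_ind[OF fin] .
  have fe: "fire_by F (\<lambda>w. if fst w = x then -1 else 0) (D_xy F x y) v
      = D_xy F x y v - int (card N) * (if fst v = x then -1 else 0) - int (card A)"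
    unfolding fire_by_def rook_deg_def using sN N_def by simp
  obtain a b where vab: "v = (a, b)" by force
  show ?thesis
  proof (cases "a = x")
    case True
    have "x = 1 \<or> (x - 1, b) \<in> F" using F v vab True unfolding ferrers_def by fastforce
    hence "(x - 1, b) \<in> F" using x by simp
    hence "(x - 1, b) \<in> B" unfolding B_def N_def rook_adj_def using vab True x by auto
    moreover have "finite B" using fin unfolding B_def by simp
    ultimately have "card B \<ge> 1"
      by (metis One_nat_def Suc_leI card_gt_0_iff empty_iff)
    thus ?thesis using fe cN vab True by (simp add: D_xy_def)
  next
    case False
    have Asub: "A \<subseteq> {(x, b)} \<inter> F" unfolding A_def N_def rook_adj_def using vab False by auto
    have "card A \<le> card ({(x, b)} \<inter> F)" by (rule card_mono) (use Asub in auto)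
    also have "\<dots> \<le> 1" by (simp add: card_le_Suc0_iff_eq)
    finally have cA: "card A \<le> 1" .
    show ?thesis
    proof (cases "b = y")
      case True
      have "A = {}" using Asub xy True by auto
      thus ?thesis using fe vab False by (simp add: D_xy_def)
    next
      case False
      thus ?thesis using fe vab \<open>a \<noteq> x\<close> cA v by (simp add: D_xy_def)
    qed
  qed
qed

lemma row_case:
  assumes F: "ferrers F" and y: "y > 1" and xy: "(x, y) \<notin> F" and v: "v \<in> F"
  shows "fire_by F (\<lambda>w. if snd w = y then -1 else 0) (D_xy F x y) v \<ge> 0
       \<and> (snd v = y \<longrightarrow> fire_by F (\<lambda>w. if snd w = y then -1 else 0) (D_xy F x y) v > 0)"
proof -
  define N where "N = {w\<in>F. rook_adj v w}"
  have "finite F" using F unfolding ferrers_def by blast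
  hence fin: "finite N" unfolding N_def by simp
  define A where "A = {w\<in>N. snd w = y}"
  define B where "B = {w\<in>N. snd w \<noteq> y}"
  have cN: "card N = card A + card B" unfolding A_def B_def using card_split[OF fin] .
  have sN: "(\<Sum>w\<in>N. (if snd w = y then -1 else 0::int)) = - int (card A)"
    unfolding A_def using sum_ind[OF fin] .
  have fe: "fire_by F (\<lambda>w. if snd w = y then -1 else 0) (D_xy F x y) v
      = D_xy F x y v - int (card N) * (if snd v = y then -1 else 0) - int (card A)"
    unfolding fire_by_def rook_deg_def using sN N_def by simp
  obtain a b where vab: "v = (a, b)" by force
  show ?thesis
  proof (cases "b = y")
    case True
    have "y = 1 \<or> (a, y - 1) \<in> F" using F v vab True unfolding ferrers_def by fastforce
    hence "(a, y - 1) \<in> F" using y by simp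
    hence "(a, y - 1) \<in> B" unfolding B_def N_def rook_adj_def using vab True y by auto
    moreover have "finite B" using fin unfolding B_def by simp
    ultimately have "card B \<ge> 1"
      by (metis One_nat_def Suc_leI card_gt_0_iff empty_iff)
    thus ?thesis using fe cN vab True by (simp add: D_xy_def)
  next
    case False
    have Asub: "A \<subseteq> {(a, y)} \<inter> F" unfolding A_def N_def rook_adj_def using vab False by auto
    have "card A \<le> card ({(a, y)} \<inter> F)" by (rule card_mono) (use Asub in auto)
    also have "\<dots> \<le> 1" by (simp add: card_le_Suc0_iff_eq)
    finally have cA: "card A \<le> 1" .
    show ?thesis
    proof (cases "a = x")
      case True
      have "A = {}" using Asub xy True by auto
      thus ?thesis using fe vab False by (simp add: D_xy_def)
    next
      case False
      thus ?thesis using fe vab \<open>b \<noteq> y\<close> cA v by (simp add: D_xy_def)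
    qed
  qed
qed

theorem proposition3p1:
  fixes F :: "(nat \<times> nat) set" and x y :: nat
  assumes "ferrers F" and "x > 1" and "y > 1" and "(x, y) \<notin> F"
  shows "positive_rank F (D_xy F x y)"
  unfolding positive_rank_def
proof
  fix v assume v: "v \<in> F"
  show "\<exists>D'. div_equiv F (D_xy F x y) D' \<and> effective F D' \<and> D' v > 0"
  proof (cases "fst v = x")
    case True
    let ?D = "fire_by F (\<lambda>w. if fst w = x then -1 else 0) (D_xy F x y)"
    have "div_equiv F (D_xy F x y) ?D" unfolding div_equiv_def by blast
    moreover have "effective F ?D" unfolding effective_def using col_case assms by blast
    moreover have "?D v > 0" using col_case[OF assms(1,2,4) v] True by blast
    ultimately show ?thesis by blast
  next
    case nx: False
    show ?thesis
    proof (cases "snd v = y")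
      case True
      let ?D = "fire_by F (\<lambda>w. if snd w = y then -1 else 0) (D_xy F x y)"
      have "div_equiv F (D_xy F x y) ?D" unfolding div_equiv_def by blast
      moreover have "effective F ?D" unfolding effective_def using row_case assms by blast
      moreover have "?D v > 0" using row_case[OF assms(1,3,4) v] True by blast
      ultimately show ?thesis by blast
    next
      case False
      let ?D = "fire_by F (\<lambda>w. 0) (D_xy F x y)"
      have e: "\<And>w. ?D w = D_xy F x y w" unfolding fire_by_def by simp
      have "div_equiv F (D_xy F x y) ?D" unfolding div_equiv_def by blast
      moreover have "effective F ?D" unfolding effective_def e D_xy_def by simp
      moreover have "?D v > 0" unfolding e D_xy_def using v nx False by simp
      ultimately show ?thesis by blast
    qed
  qed
qed

end
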